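(* Let $F$ be a field of characteristic $0$, $D$ a simply laced diagram on vertices $v_1,\dots,v_n$, and $\mathfrak k=\mathfrak k(D)$ with Berman generators $X_1,\dots,X_n$. Suppose $v_i\neq v_j$ are vertices such that every vertex $v_r\notin\{v_i,v_j\}$ is adjacent to $v_i$ if and only if it is adjacent to $v_j$. (a) If $v_i,v_j$ are not adjacent, let $D'$ be obtained from $D$ by deleting $v_j$, and let $X'_r$ ($r\neq j$) be the Berman generators of $\mathfrak k':=\mathfrak k(D')$. Then there is a well-defined surjective Lie algebra homomorphism $\varphi:\mathfrak k\to\mathfrak k'$ with $\varphi(X_r)=X'_r$ for $r\ne j$ and $\varphi(X_j)=X'_i$. (b) If $v_i,v_j$ are adjacent, let $D'$ be obtained from $D$ by deleting all edges at $v_j$ except the edge $\{v_i,v_j\}$, and let $X'_1,\dots,X'_n$ be the Berman generators of $\mathfrak k':=\mathfrak k(D')$. Then there is a well-defined surjective Lie algebra homomorphism $\varphi:\mathfrak k\to\mathfrak k'$ with $\varphi(X_r)=X'_r$ for $r\neq j$ and $\varphi(X_j)=[X'_i,X'_j]$.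
   Context: For a simply laced diagram (finite simple graph) $D$ on vertices $v_1,\dots,v_n$, $\mathfrak k(D)$ denotes the maximal compact subalgebra (fixed points of the Cartan--Chevalley involution $e_i\mapsto -f_i$, $f_i\mapsto -e_i$, $h_i\mapsto -h_i$) of the Kac--Moody algebra over $F$ whose generalized Cartan matrix has $a_{ii}=2$ and $a_{ij}=-1$ or $0$ according as $v_i,v_j$ are adjacent or not. By Berman's theorem, $\mathfrak k(D)$ is the Lie algebra with generators $X_1,\dots,X_n$ (the Berman generators, $X_i=e_i-f_i$) and defining relations $[X_a,[X_a,X_b]]=-X_b$ if $v_a,v_b$ are adjacent, $[X_a,X_b]=0$ if $a\ne b$ are non-adjacent. *)

theory Defs
  imports Main
begin

datatype ('a, 'v) lterm =
    Gen 'v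
  | LZero
  | LAdd "('a, 'v) lterm" "('a, 'v) lterm"
  | LScal 'a "('a, 'v) lterm"
  | LBr "('a, 'v) lterm" "('a, 'v) lterm"

fun gens :: "('a, 'v) lterm \<Rightarrow> 'v set" where
  "gens (Gen v) = {v}"
| "gens LZero = {}"
| "gens (LAdd x y) = gens x \<union> gens y"
| "gens (LScal c x) = gens x"
| "gens (LBr x y) = gens x \<union> gens y"

definition wf_term :: "'v set \<Rightarrow> ('a, 'v) lterm \<Rightarrow> bool" where
  "wf_term V t \<longleftrightarrow> gens t \<subseteq> V"

definition simple_diagram :: "'v set \<Rightarrow> ('v \<Rightarrow> 'v \<Rightarrow> bool) \<Rightarrow> bool" where
  "simple_diagram V E \<longleftrightarrow> finite V \<and> (\<forall>x y. E x y \<longrightarrow> E y x) \<and> (\<forall>x. \<not> E x x)"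

text \<open>The congruence on Lie expressions whose quotient is the Lie algebra over 'a with
  generators X_v (v in V) and the Berman relations of the diagram (V,E):
  smallest congruence containing the vector space axioms, bilinearity, alternation,
  the Jacobi identity and the Berman relations.\<close>
inductive kD_eq :: "'v set \<Rightarrow> ('v \<Rightarrow> 'v \<Rightarrow> bool) \<Rightarrow> ('a::field, 'v) lterm \<Rightarrow> ('a, 'v) lterm \<Rightarrow> bool"
  for V E where
  refl: "kD_eq V E x x"
| sym: "kD_eq V E x y \<Longrightarrow> kD_eq V E y x"
| trans: "kD_eq V E x y \<Longrightarrow> kD_eq V E y z \<Longrightarrow> kD_eq V E x z"
| cong_add: "kD_eq V E x x' \<Longrightarrow> kD_eq V E y y' \<Longrightarrow> kD_eq V E (LAdd x y) (LAdd x' y')"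
| cong_scal: "kD_eq V E x x' \<Longrightarrow> kD_eq V E (LScal c x) (LScal c x')"
| cong_br: "kD_eq V E x x' \<Longrightarrow> kD_eq V E y y' \<Longrightarrow> kD_eq V E (LBr x y) (LBr x' y')"
| add_assoc: "kD_eq V E (LAdd (LAdd x y) z) (LAdd x (LAdd y z))"
| add_comm: "kD_eq V E (LAdd x y) (LAdd y x)"
| add_zero: "kD_eq V E (LAdd x LZero) x"
| add_neg: "kD_eq V E (LAdd x (LScal (-1) x)) LZero"
| scal_scal: "kD_eq V E (LScal c (LScal d x)) (LScal (c * d) x)"
| scal_one: "kD_eq V E (LScal 1 x) x"
| scal_add: "kD_eq V E (LScal c (LAdd x y)) (LAdd (LScal c x) (LScal c y))"
| add_scal: "kD_eq V E (LScal (c + d) x) (LAdd (LScal c x) (LScal d x))"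
| br_add_left: "kD_eq V E (LBr (LAdd x y) z) (LAdd (LBr x z) (LBr y z))"
| br_add_right: "kD_eq V E (LBr z (LAdd x y)) (LAdd (LBr z x) (LBr z y))"
| br_scal_left: "kD_eq V E (LBr (LScal c x) y) (LScal c (LBr x y))"
| br_scal_right: "kD_eq V E (LBr x (LScal c y)) (LScal c (LBr x y))"
| br_alt: "kD_eq V E (LBr x x) LZero"
| jacobi: "kD_eq V E (LAdd (LBr x (LBr y z)) (LAdd (LBr y (LBr z x)) (LBr z (LBr x y)))) LZero"
| berman_adj: "a \<in> V \<Longrightarrow> b \<in> V \<Longrightarrow> E a b \<Longrightarrow>
      kD_eq V E (LBr (Gen a) (LBr (Gen a) (Gen b))) (LScal (-1) (Gen b))"
| berman_nonadj: "a \<in> V \<Longrightarrow> b \<in> V \<Longrightarrow> a \<noteq> b \<Longrightarrow> \<not> E a b \<Longrightarrow>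
      kD_eq V E (LBr (Gen a) (Gen b)) LZero"

text \<open>phi (on representatives) induces a well-defined Lie algebra homomorphism
  k(V,E) \<rightarrow> k(V',E') (F-linear, bracket-preserving).\<close>
definition induces_hom ::
  "'v set \<Rightarrow> ('v \<Rightarrow> 'v \<Rightarrow> bool) \<Rightarrow> 'v set \<Rightarrow> ('v \<Rightarrow> 'v \<Rightarrow> bool)
   \<Rightarrow> (('a::field, 'v) lterm \<Rightarrow> ('a, 'v) lterm) \<Rightarrow> bool" where
  "induces_hom V E V' E' \<phi> \<longleftrightarrow>
     (\<forall>x. wf_term V x \<longrightarrow> wf_term V' (\<phi> x)) \<and>
     (\<forall>x y. wf_term V x \<longrightarrow> wf_term V y \<longrightarrow> kD_eq V E x y \<longrightarrow> kD_eq V' E' (\<phi> x) (\<phi> y)) \<and>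
     (\<forall>x y. wf_term V x \<longrightarrow> wf_term V y \<longrightarrow> kD_eq V' E' (\<phi> (LAdd x y)) (LAdd (\<phi> x) (\<phi> y))) \<and>
     (\<forall>c x. wf_term V x \<longrightarrow> kD_eq V' E' (\<phi> (LScal c x)) (LScal c (\<phi> x))) \<and>
     (\<forall>x y. wf_term V x \<longrightarrow> wf_term V y \<longrightarrow> kD_eq V' E' (\<phi> (LBr x y)) (LBr (\<phi> x) (\<phi> y)))"

definition induces_surj ::
  "'v set \<Rightarrow> 'v set \<Rightarrow> ('v \<Rightarrow> 'v \<Rightarrow> bool)
   \<Rightarrow> (('a::field, 'v) lterm \<Rightarrow> ('a, 'v) lterm) \<Rightarrow> bool" where
  "induces_surj V V' E' \<phi> \<longleftrightarrow>
     (\<forall>y. wf_term V' y \<longrightarrow> (\<exists>x. wf_term V x \<and> kD_eq V' E' (\<phi> x) y))"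

end

theory Submission
  imports Defs
begin

context fixes V :: "'v set" and E :: "'v \<Rightarrow> 'v \<Rightarrow> bool" begin

abbreviation eqk :: "('a::field,'v) lterm \<Rightarrow> ('a,'v) lterm \<Rightarrow> bool" (infix "\<approx>" 50)
  where "x \<approx> y \<equiv> kD_eq V E x y"

abbreviation neg :: "('a::field,'v) lterm \<Rightarrow> ('a,'v) lterm" where "neg x \<equiv> LScal (-1) x"

lemma tr[trans]: "x \<approx> y \<Longrightarrow> y \<approx> z \<Longrightarrow> x \<approx> z" by (rule kD_eq.trans)
lemma sy: "x \<approx> y \<Longrightarrow> y \<approx> x" by (rule kD_eq.sym)
lemma rf: "x \<approx> x" by (rule kD_eq.refl)

lemma add_zero_l: "LAdd LZero x \<approx> x"
  using kD_eq.trans[OF kD_eq.add_comm kD_eq.add_zero] .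

lemma scal_zero: "LScal 0 x \<approx> LZero"
proof -
  let ?s = "LScal 0 x"
  have "LZero \<approx> LAdd ?s (neg ?s)" by (rule sy, rule kD_eq.add_neg)
  also have "\<dots> \<approx> LAdd (LAdd ?s ?s) (neg ?s)"
    using kD_eq.cong_add[OF kD_eq.add_scal[where c=0 and d=0, simplified] rf] .
  also have "\<dots> \<approx> LAdd ?s (LAdd ?s (neg ?s))" by (rule kD_eq.add_assoc)
  also have "\<dots> \<approx> LAdd ?s LZero" by (rule kD_eq.cong_add[OF rf kD_eq.add_neg])
  also have "\<dots> \<approx> ?s" by (rule kD_eq.add_zero)
  finally show ?thesis by (rule sy)
qed

lemma scal_LZero: "LScal c LZero \<approx> LZero"
proof -
  have "LScal c LZero \<approx> LScal c (LScal 0 LZero)" by (rule kD_eq.cong_scal[OF sy[OF scal_zero]])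
  also have "\<dots> \<approx> LScal (c*0) LZero" by (rule kD_eq.scal_scal)
  also have "\<dots> \<approx> LZero" using scal_zero by simp
  finally show ?thesis .
qed

lemma scal_cong_zero: "x \<approx> LZero \<Longrightarrow> LScal c x \<approx> LZero"
  using tr[OF kD_eq.cong_scal scal_LZero] by blast

lemma br_zero_l: "LBr LZero y \<approx> LZero"
proof -
  have "LBr LZero y \<approx> LBr (LScal 0 LZero) y" by (rule kD_eq.cong_br[OF sy[OF scal_zero] rf])
  also have "\<dots> \<approx> LScal 0 (LBr LZero y)" by (rule kD_eq.br_scal_left)
  also have "\<dots> \<approx> LZero" by (rule scal_zero)
  finally show ?thesis .
qed

lemma br_zero_r: "LBr y LZero \<approx> LZero"
proof -
  have "LBr y LZero \<approx> LBr y (LScal 0 LZero)" by (rule kD_eq.cong_br[OF rf sy[OF scal_zero]])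
  also have "\<dots> \<approx> LScal 0 (LBr y LZero)" by (rule kD_eq.br_scal_right)
  also have "\<dots> \<approx> LZero" by (rule scal_zero)
  finally show ?thesis .
qed

lemma br_cz_l: "x \<approx> LZero \<Longrightarrow> LBr x y \<approx> LZero"
  using tr[OF kD_eq.cong_br[OF _ rf] br_zero_l] by blast
lemma br_cz_r: "y \<approx> LZero \<Longrightarrow> LBr x y \<approx> LZero"
  using tr[OF kD_eq.cong_br[OF rf] br_zero_r] by blast
lemma add_cz_l: "x \<approx> LZero \<Longrightarrow> LAdd x y \<approx> y"
  using tr[OF kD_eq.cong_add[OF _ rf] add_zero_l] by blast
lemma add_cz_r: "y \<approx> LZero \<Longrightarrow> LAdd x y \<approx> x"
  using tr[OF kD_eq.cong_add[OF rf] kD_eq.add_zero] by blast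

lemma cancel: "LAdd a b \<approx> LZero \<Longrightarrow> a \<approx> neg b"
proof -
  assume h: "LAdd a b \<approx> LZero"
  have "a \<approx> LAdd a LZero" by (rule sy, rule kD_eq.add_zero)
  also have "\<dots> \<approx> LAdd a (LAdd b (neg b))" by (rule kD_eq.cong_add[OF rf sy[OF kD_eq.add_neg]])
  also have "\<dots> \<approx> LAdd (LAdd a b) (neg b)" by (rule sy, rule kD_eq.add_assoc)
  also have "\<dots> \<approx> neg b" by (rule add_cz_l[OF h])
  finally show ?thesis .
qed

lemma move: "p \<approx> LAdd q r \<Longrightarrow> q \<approx> LAdd p (neg r)"
proof -
  assume h: "p \<approx> LAdd q r"
  have "q \<approx> LAdd q LZero" by (rule sy, rule kD_eq.add_zero)
  also have "\<dots> \<approx> LAdd q (LAdd r (neg r))" by (rule kD_eq.cong_add[OF rf sy[OF kD_eq.add_neg]])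
  also have "\<dots> \<approx> LAdd (LAdd q r) (neg r)" by (rule sy, rule kD_eq.add_assoc)
  also have "\<dots> \<approx> LAdd p (neg r)" by (rule kD_eq.cong_add[OF sy[OF h] rf])
  finally show ?thesis .
qed

lemma neg_neg: "neg (neg x) \<approx> x"
proof -
  have "neg (neg x) \<approx> LScal ((-1)*(-1)) x" by (rule kD_eq.scal_scal)
  also have "\<dots> \<approx> x" using kD_eq.scal_one by simp
  finally show ?thesis .
qed

lemma neg_swap: "a \<approx> neg b \<Longrightarrow> neg a \<approx> b"
  using tr[OF kD_eq.cong_scal neg_neg] by blast

lemma neg_cong: "a \<approx> b \<Longrightarrow> neg a \<approx> neg b" by (rule kD_eq.cong_scal)

lemma anticomm: "LBr x y \<approx> neg (LBr y x)"
proof -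
  have "LZero \<approx> LBr (LAdd x y) (LAdd x y)" by (rule sy, rule kD_eq.br_alt)
  also have "\<dots> \<approx> LAdd (LBr x (LAdd x y)) (LBr y (LAdd x y))" by (rule kD_eq.br_add_left)
  also have "\<dots> \<approx> LAdd (LAdd (LBr x x) (LBr x y)) (LAdd (LBr y x) (LBr y y))"
    by (rule kD_eq.cong_add[OF kD_eq.br_add_right kD_eq.br_add_right])
  also have "\<dots> \<approx> LAdd (LBr x y) (LBr y x)"
    by (rule kD_eq.cong_add[OF add_cz_l[OF kD_eq.br_alt] add_cz_r[OF kD_eq.br_alt]])
  finally show ?thesis by (rule cancel[OF sy])
qed

lemma jac_der: "LBr x (LBr y z) \<approx> LAdd (LBr (LBr x y) z) (LBr y (LBr x z))"
proof -
  have "LBr x (LBr y z) \<approx> neg (LAdd (LBr y (LBr z x)) (LBr z (LBr x y)))"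
    by (rule cancel[OF kD_eq.jacobi])
  also have "\<dots> \<approx> LAdd (neg (LBr y (LBr z x))) (neg (LBr z (LBr x y)))" by (rule kD_eq.scal_add)
  also have "\<dots> \<approx> LAdd (neg (LBr z (LBr x y))) (neg (LBr y (LBr z x)))" by (rule kD_eq.add_comm)
  also have "\<dots> \<approx> LAdd (LBr (LBr x y) z) (LBr y (LBr x z))"
  proof (rule kD_eq.cong_add)
    show "neg (LBr z (LBr x y)) \<approx> LBr (LBr x y) z" by (rule neg_swap[OF anticomm])
    have "LBr y (LBr x z) \<approx> neg (LBr y (LBr z x))"
      using tr[OF kD_eq.cong_br[OF rf anticomm] kD_eq.br_scal_right] .
    then show "neg (LBr y (LBr z x)) \<approx> LBr y (LBr x z)" by (rule sy)
  qed
  finally show ?thesis .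
qed

lemma jac2: "LBr (LBr x y) z \<approx> LAdd (LBr x (LBr y z)) (neg (LBr y (LBr x z)))"
  by (rule move[OF jac_der])

lemma half: "(w :: ('a::field_char_0,'v) lterm) \<approx> neg w \<Longrightarrow> w \<approx> LZero"
proof -
  assume h: "w \<approx> neg w"
  have z: "LAdd w w \<approx> LZero" using tr[OF kD_eq.cong_add[OF rf h] kD_eq.add_neg] .
  have "w \<approx> LScal 1 w" by (rule sy, rule kD_eq.scal_one)
  also have "\<dots> = LScal ((1/2)*2) w" by simp
  also have "\<dots> \<approx> LScal (1/2) (LScal 2 w)" by (rule sy, rule kD_eq.scal_scal)
  also have "LScal 2 w \<approx> LAdd w w"
    using tr[OF kD_eq.add_scal[where c=1 and d=1] kD_eq.cong_add[OF kD_eq.scal_one kD_eq.scal_one]]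
    by simp
  hence "LScal (1/2) (LScal 2 w) \<approx> LZero" by (rule scal_cong_zero[OF tr[OF _ z]])
  finally show ?thesis .
qed

lemma Lb2: assumes h: "LBr A (LBr A B) \<approx> neg B"
  shows "LBr A (LBr A (LBr A B)) \<approx> neg (LBr A B)"
  using tr[OF kD_eq.cong_br[OF rf h] kD_eq.br_scal_right] .

lemma YA: assumes hA: "LBr A (LBr A B) \<approx> neg B"
  shows "LBr (LBr A B) A \<approx> B"
  using tr[OF anticomm neg_swap[OF hA]] .

lemma Lb3: assumes hA: "LBr A (LBr A B) \<approx> neg B" and hB: "LBr B (LBr B A) \<approx> neg A"
  shows "LBr (LBr A B) (LBr (LBr A B) A) \<approx> neg A"
proof -
  have "LBr (LBr A B) (LBr (LBr A B) A) \<approx> LBr (LBr A B) B"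
    by (rule kD_eq.cong_br[OF rf YA[OF hA]])
  also have "\<dots> \<approx> neg (LBr B (LBr A B))" by (rule anticomm)
  also have "LBr B (LBr A B) \<approx> neg (LBr B (LBr B A))"
    using tr[OF kD_eq.cong_br[OF rf anticomm] kD_eq.br_scal_right] .
  hence "neg (LBr B (LBr A B)) \<approx> LBr B (LBr B A)" by (rule neg_swap)
  also have "\<dots> \<approx> neg A" by (rule hB)
  finally show ?thesis .
qed

lemma Lb4:
  fixes A :: "('a::field_char_0,'v) lterm"
  assumes hA2: "LBr A (LBr A X) \<approx> neg X" and hBX: "LBr B X \<approx> LZero"
    and hA: "LBr A (LBr A B) \<approx> neg B" and hB: "LBr B (LBr B A) \<approx> neg A"
  shows "LBr (LBr A B) (LBr (LBr A B) X) \<approx> neg X"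
proof -
  define Y where "Y = LBr A B"
  define Z where "Z = LBr A X"
  have s1: "LBr Y X \<approx> neg (LBr B Z)"
    unfolding Y_def Z_def using tr[OF jac2 add_cz_l[OF br_cz_r[OF hBX]]] .
  have w1: "LBr A (LBr B Z) \<approx> LBr Y Z"
  proof -
    have "LBr A (LBr B Z) \<approx> LAdd (LBr Y Z) (LBr B (LBr A Z))" unfolding Y_def by (rule jac_der)
    also have "LBr B (LBr A Z) \<approx> LZero" unfolding Z_def
      using tr[OF tr[OF kD_eq.cong_br[OF rf hA2] kD_eq.br_scal_right] scal_cong_zero[OF hBX]] .
    hence "LAdd (LBr Y Z) (LBr B (LBr A Z)) \<approx> LBr Y Z" by (rule add_cz_r)
    finally show ?thesis .
  qed
  have w2: "LBr Y Z \<approx> neg (LBr A (LBr B Z))"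
  proof -
    have "LBr Y Z \<approx> LAdd (LBr (LBr Y A) X) (LBr A (LBr Y X))" unfolding Z_def by (rule jac_der)
    also have "LBr (LBr Y A) X \<approx> LZero"
      unfolding Y_def using tr[OF kD_eq.cong_br[OF YA[OF hA] rf] hBX] .
    hence "LAdd (LBr (LBr Y A) X) (LBr A (LBr Y X)) \<approx> LBr A (LBr Y X)" by (rule add_cz_l)
    also have "\<dots> \<approx> neg (LBr A (LBr B Z))"
      using tr[OF kD_eq.cong_br[OF rf s1] kD_eq.br_scal_right] .
    finally show ?thesis .
  qed
  have w0: "LBr A (LBr B Z) \<approx> LZero" by (rule half[OF tr[OF w1 w2]])
  have s2: "LBr B (LBr B Z) \<approx> neg Z"
  proof -
    have e1: "LBr B Z \<approx> LBr (LBr B A) X" unfolding Z_def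
      using tr[OF jac_der add_cz_r[OF br_cz_r[OF hBX]]] .
    have "LBr B (LBr B Z) \<approx> LBr B (LBr (LBr B A) X)" by (rule kD_eq.cong_br[OF rf e1])
    also have "\<dots> \<approx> LBr (LBr B (LBr B A)) X"
      using tr[OF jac_der add_cz_r[OF br_cz_r[OF hBX]]] .
    also have "\<dots> \<approx> LBr (neg A) X" by (rule kD_eq.cong_br[OF _ rf]) (rule hB)
    also have "\<dots> \<approx> neg Z" unfolding Z_def by (rule kD_eq.br_scal_left)
    finally show ?thesis .
  qed
  have "LBr Y (LBr Y X) \<approx> LBr Y (neg (LBr B Z))" by (rule kD_eq.cong_br[OF rf s1])
  also have "\<dots> \<approx> neg (LBr Y (LBr B Z))" by (rule kD_eq.br_scal_right)
  also have "LBr Y (LBr B Z) \<approx> X"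
  proof -
    have "LBr Y (LBr B Z) \<approx> LAdd (LBr A (LBr B (LBr B Z))) (neg (LBr B (LBr A (LBr B Z))))"
      unfolding Y_def by (rule jac2)
    also have "\<dots> \<approx> LBr A (LBr B (LBr B Z))" by (rule add_cz_r[OF scal_cong_zero[OF br_cz_r[OF w0]]])
    also have "\<dots> \<approx> LBr A (neg Z)" by (rule kD_eq.cong_br[OF rf s2])
    also have "\<dots> \<approx> neg (neg X)" unfolding Z_def
      using tr[OF kD_eq.br_scal_right kD_eq.cong_scal[OF hA2]] .
    also have "\<dots> \<approx> X" by (rule neg_neg)
    finally show ?thesis .
  qed
  hence "neg (LBr Y (LBr B Z)) \<approx> neg X" by (rule neg_cong)
  finally show ?thesis unfolding Y_def .
qed

lemma Lb5: assumes hXA: "LBr X (LBr X A) \<approx> neg A" and hXB: "LBr X B \<approx> LZero"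
  shows "LBr X (LBr X (LBr A B)) \<approx> neg (LBr A B)"
proof -
  have "LBr X (LBr X (LBr A B)) \<approx> LBr X (LBr (LBr X A) B)"
    by (rule kD_eq.cong_br[OF rf tr[OF jac_der add_cz_r[OF br_cz_r[OF hXB]]]])
  also have "\<dots> \<approx> LBr (LBr X (LBr X A)) B"
    using tr[OF jac_der add_cz_r[OF br_cz_r[OF hXB]]] .
  also have "\<dots> \<approx> LBr (neg A) B" by (rule kD_eq.cong_br[OF hXA rf])
  also have "\<dots> \<approx> neg (LBr A B)" by (rule kD_eq.br_scal_left)
  finally show ?thesis .
qed

lemma Ln1: assumes "LBr X A \<approx> LZero" "LBr X B \<approx> LZero"
  shows "LBr X (LBr A B) \<approx> LZero"
  using tr[OF jac_der add_cz_r[OF br_cz_r[OF assms(2)]]] br_cz_l[OF assms(1)] tr by blast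

lemma Ln2: assumes "LBr X A \<approx> LZero" "LBr X B \<approx> LZero"
  shows "LBr (LBr A B) X \<approx> LZero"
  using tr[OF anticomm scal_cong_zero[OF Ln1[OF assms]]] .

end


fun subst :: "('v \<Rightarrow> ('a,'v) lterm) \<Rightarrow> ('a,'v) lterm \<Rightarrow> ('a,'v) lterm" where
  "subst f (Gen v) = f v"
| "subst f LZero = LZero"
| "subst f (LAdd x y) = LAdd (subst f x) (subst f y)"
| "subst f (LScal c x) = LScal c (subst f x)"
| "subst f (LBr x y) = LBr (subst f x) (subst f y)"

lemma subst_resp:
  assumes "kD_eq V E x y"
    and adj: "\<And>a b. a\<in>V \<Longrightarrow> b\<in>V \<Longrightarrow> E a b \<Longrightarrow>
       kD_eq V' E' (LBr (f a) (LBr (f a) (f b))) (LScal (-1) (f b))"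
    and nadj: "\<And>a b. a\<in>V \<Longrightarrow> b\<in>V \<Longrightarrow> a\<noteq>b \<Longrightarrow> \<not> E a b \<Longrightarrow> kD_eq V' E' (LBr (f a) (f b)) LZero"
  shows "kD_eq V' E' (subst f x) (subst f y)"
  using assms(1) by induction (auto intro: kD_eq.intros adj nadj)

lemma subst_wf: "wf_term V x \<Longrightarrow> (\<forall>r\<in>V. gens (f r) \<subseteq> V') \<Longrightarrow> wf_term V' (subst f x)"
  unfolding wf_term_def by (induction x) auto

lemma subst_id: "(\<forall>r\<in>gens y. f r = Gen r) \<Longrightarrow> subst f y = y"
  by (induction y) auto

lemma subst_inv: "(\<forall>r\<in>gens y. kD_eq V E (subst f (g r)) (Gen r)) \<Longrightarrow> kD_eq V E (subst f (subst g y)) y"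
  by (induction y) (auto intro: kD_eq.intros)

lemma hom_basic:
  assumes "\<And>x y. wf_term V x \<Longrightarrow> wf_term V y \<Longrightarrow> kD_eq V E x y \<Longrightarrow> kD_eq V' E' (subst f x) (subst f y)"
    and "\<forall>r\<in>V. gens (f r) \<subseteq> V'"
  shows "induces_hom V E V' E' (subst f)"
  unfolding induces_hom_def using assms subst_wf[OF _ assms(2)] by (auto intro: kD_eq.refl)

theorem mainTheorem4:
  fixes V :: "'v set" and E :: "'v \<Rightarrow> 'v \<Rightarrow> bool" and i j :: 'v
  assumes "simple_diagram V E"
    and "i \<in> V" and "j \<in> V" and "i \<noteq> j"
    and "\<forall>r\<in>V - {i, j}. (E r i \<longleftrightarrow> E r j)"
  shows
    "(\<not> E i j \<longrightarrow>
       (\<exists>\<phi> :: ('a::field_char_0, 'v) lterm \<Rightarrow> ('a, 'v) lterm.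
          induces_hom V E (V - {j}) E \<phi> \<and> induces_surj V (V - {j}) E \<phi> \<and>
          (\<forall>r\<in>V - {j}. kD_eq (V - {j}) E (\<phi> (Gen r)) (Gen r)) \<and>
          kD_eq (V - {j}) E (\<phi> (Gen j)) (Gen i)))
   \<and>
    (E i j \<longrightarrow>
       (let E' = (\<lambda>x y. E x y \<and> ((x = j \<or> y = j) \<longrightarrow> {x, y} = {i, j})) in
       (\<exists>\<phi> :: ('a::field_char_0, 'v) lterm \<Rightarrow> ('a, 'v) lterm.
          induces_hom V E V E' \<phi> \<and> induces_surj V V E' \<phi> \<and>
          (\<forall>r\<in>V - {j}. kD_eq V E' (\<phi> (Gen r)) (Gen r)) \<and>
          kD_eq V E' (\<phi> (Gen j)) (LBr (Gen i) (Gen j)))))"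
proof (intro conjI impI)
  from assms(1) have symE: "\<And>x y. E x y \<Longrightarrow> E y x" and irr: "\<And>x. \<not> E x x"
    unfolding simple_diagram_def by auto
  have twin: "\<And>r. r \<in> V \<Longrightarrow> r \<noteq> i \<Longrightarrow> r \<noteq> j \<Longrightarrow> E r i \<longleftrightarrow> E r j" using assms(5) by auto
  { assume nij: "\<not> E i j"
    define f :: "'v \<Rightarrow> ('a,'v) lterm" where "f = (\<lambda>r. if r = j then Gen i else Gen r)"
    let ?V' = "V - {j}"
    have fV: "\<forall>r\<in>V. gens (f r) \<subseteq> ?V'" using assms(2,4) by (auto simp: f_def)
    have resp: "kD_eq ?V' E (subst f x) (subst f y)" if "kD_eq V E x y" for x y
    proof (rule subst_resp[OF that])
      fix a b assume ab: "a \<in> V" "b \<in> V" "E a b"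
      show "kD_eq ?V' E (LBr (f a) (LBr (f a) (f b))) (LScal (-1) (f b))"
      proof (cases "a = j")
        case True
        then have "b \<noteq> i" "b \<noteq> j" using ab nij irr symE by auto
        then have "E i b" using twin[of b] ab True symE by auto
        then show ?thesis using True \<open>b \<noteq> j\<close> ab assms(2,4) \<open>b \<noteq> i\<close>
          by (auto simp: f_def intro: kD_eq.berman_adj)
      next
        case False
        show ?thesis
        proof (cases "b = j")
          case True
          then have "a \<noteq> i" using ab nij by auto
          then have "E a i" using twin[of a] ab True False by auto
          then show ?thesis using True False ab assms(2,4)
            by (auto simp: f_def intro: kD_eq.berman_adj)
        next
          case False
          then show ?thesis using \<open>a \<noteq> j\<close> ab by (auto simp: f_def intro: kD_eq.berman_adj)
        qed
      qed
    next
      fix a b assume ab: "a \<in> V" "b \<in> V" "a \<noteq> b" "\<not> E a b"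
      show "kD_eq ?V' E (LBr (f a) (f b)) LZero"
      proof (cases "a = j")
        case True
        show ?thesis
        proof (cases "b = i")
          case True
          then show ?thesis using \<open>a = j\<close> by (simp add: f_def kD_eq.br_alt)
        next
          case False
          then have "\<not> E i b" using twin[of b] ab \<open>a = j\<close> symE by blast
          then show ?thesis using \<open>a = j\<close> False ab assms(2,4)
            by (auto simp: f_def intro: kD_eq.berman_nonadj)
        qed
      next
        case False
        show ?thesis
        proof (cases "b = j")
          case True
          show ?thesis
          proof (cases "a = i")
            case True
            then show ?thesis using \<open>b = j\<close> by (simp add: f_def kD_eq.br_alt)
          next
            case False
            then have "\<not> E a i" using twin[of a] ab \<open>b = j\<close> \<open>a \<noteq> j\<close> by blast
            then show ?thesis using \<open>b = j\<close> False \<open>a \<noteq> j\<close> ab assms(2,4)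
              by (auto simp: f_def intro: kD_eq.berman_nonadj)
          qed
        next
          case False
          then show ?thesis using \<open>a \<noteq> j\<close> ab by (auto simp: f_def intro: kD_eq.berman_nonadj)
        qed
      qed
    qed
    have "induces_hom V E ?V' E (subst f)" by (rule hom_basic[OF resp fV])
    moreover have "induces_surj V ?V' E (subst f)"
      unfolding induces_surj_def
    proof (intro allI impI)
      fix y :: "('a,'v) lterm" assume "wf_term ?V' y"
      then have "subst f y = y" "wf_term V y"
        by (auto simp: wf_term_def f_def intro!: subst_id)
      then show "\<exists>x. wf_term V x \<and> kD_eq ?V' E (subst f x) y" using kD_eq.refl by metis
    qed
    ultimately show "\<exists>\<phi> :: ('a::field_char_0, 'v) lterm \<Rightarrow> ('a, 'v) lterm.
          induces_hom V E (V - {j}) E \<phi> \<and> induces_surj V (V - {j}) E \<phi> \<and>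
          (\<forall>r\<in>V - {j}. kD_eq (V - {j}) E (\<phi> (Gen r)) (Gen r)) \<and>
          kD_eq (V - {j}) E (\<phi> (Gen j)) (Gen i)"
      by (intro exI[of _ "subst f"]) (auto simp: f_def intro: kD_eq.refl)
  }
  { assume eij: "E i j"
    define E' where "E' = (\<lambda>x y. E x y \<and> ((x = j \<or> y = j) \<longrightarrow> {x, y} = {i, j}))"
    define f :: "'v \<Rightarrow> ('a,'v) lterm" where "f = (\<lambda>r. if r = j then LBr (Gen i) (Gen j) else Gen r)"
    have E'ij: "E' i j" "E' j i" using eij symE assms(4) by (auto simp: E'_def)
    have E'o: "E' a b \<longleftrightarrow> E a b" if "a \<noteq> j" "b \<noteq> j" for a b using that by (auto simp: E'_def)
    have E'j: "\<not> E' a j" "\<not> E' j a" if "a \<noteq> i" for a using that assms(4)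
      by (auto simp: E'_def doubleton_eq_iff)
    have fV: "\<forall>r\<in>V. gens (f r) \<subseteq> V" using assms(2,3) by (auto simp: f_def)
    have bij: "kD_eq V E' (LBr (Gen i) (LBr (Gen i) (Gen j))) (LScal (-1) (Gen j))"
      using assms E'ij by (intro kD_eq.berman_adj) auto
    have bji: "kD_eq V E' (LBr (Gen j) (LBr (Gen j) (Gen i))) (LScal (-1) (Gen i))"
      using assms E'ij by (intro kD_eq.berman_adj) auto
    have resp: "kD_eq V E' (subst f x) (subst f y)" if "kD_eq V E x y" for x y
    proof (rule subst_resp[OF that])
      fix a b assume ab: "a \<in> V" "b \<in> V" "E a b"
      show "kD_eq V E' (LBr (f a) (LBr (f a) (f b))) (LScal (-1) (f b))"
      proof (cases "a = j")
        case True
        then have "b \<noteq> j" using ab irr by auto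
        show ?thesis
        proof (cases "b = i")
          case True
          then show ?thesis using \<open>a = j\<close> assms(4) Lb3[OF bij bji] by (simp add: f_def)
        next
          case False
          then have "E i b" using twin[of b] ab \<open>a = j\<close> \<open>b \<noteq> j\<close> symE by blast
          then have h1: "kD_eq V E' (LBr (Gen i) (LBr (Gen i) (Gen b))) (LScal (-1) (Gen b))"
            using assms ab False \<open>b \<noteq> j\<close> E'o by (intro kD_eq.berman_adj) auto
          have h2: "kD_eq V E' (LBr (Gen j) (Gen b)) LZero"
            using assms ab False \<open>b \<noteq> j\<close> E'j by (intro kD_eq.berman_nonadj) auto
          show ?thesis using \<open>a = j\<close> \<open>b \<noteq> j\<close> Lb4[OF h1 h2 bij bji] by (simp add: f_def)
        qed
      next
        case False
        show ?thesis
        proof (cases "b = j")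
          case True
          show ?thesis
          proof (cases "a = i")
            case True
            then show ?thesis using \<open>b = j\<close> assms(4) Lb2[OF bij] by (simp add: f_def)
          next
            case False
            then have "E a i" using twin[of a] ab \<open>b = j\<close> \<open>a \<noteq> j\<close> by blast
            then have h1: "kD_eq V E' (LBr (Gen a) (LBr (Gen a) (Gen i))) (LScal (-1) (Gen i))"
              using assms ab False \<open>a \<noteq> j\<close> E'o by (intro kD_eq.berman_adj) auto
            have h2: "kD_eq V E' (LBr (Gen a) (Gen j)) LZero"
              using assms ab False \<open>a \<noteq> j\<close> E'j by (intro kD_eq.berman_nonadj) auto
            show ?thesis using \<open>b = j\<close> \<open>a \<noteq> j\<close> Lb5[OF h1 h2] by (simp add: f_def)
          qed
        next
          case False
          then show ?thesis using \<open>a \<noteq> j\<close> ab E'o by (auto simp: f_def intro: kD_eq.berman_adj)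
        qed
      qed
    next
      fix a b assume ab: "a \<in> V" "b \<in> V" "a \<noteq> b" "\<not> E a b"
      show "kD_eq V E' (LBr (f a) (f b)) LZero"
      proof (cases "a = j")
        case True
        then have "b \<noteq> i" using ab eij symE by auto
        then have "\<not> E b i" using twin[of b] ab \<open>a = j\<close> symE by blast
        then have h1: "kD_eq V E' (LBr (Gen b) (Gen i)) LZero"
          using assms ab \<open>b \<noteq> i\<close> \<open>a = j\<close> E'o by (intro kD_eq.berman_nonadj) auto
        have h2: "kD_eq V E' (LBr (Gen b) (Gen j)) LZero"
          using assms ab \<open>b \<noteq> i\<close> \<open>a = j\<close> E'j by (intro kD_eq.berman_nonadj) auto
        show ?thesis using \<open>a = j\<close> ab Ln2[OF h1 h2] by (simp add: f_def)
      next
        case False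
        show ?thesis
        proof (cases "b = j")
          case True
          then have "a \<noteq> i" using ab eij by auto
          then have "\<not> E a i" using twin[of a] ab \<open>b = j\<close> by blast
          then have h1: "kD_eq V E' (LBr (Gen a) (Gen i)) LZero"
            using assms ab \<open>a \<noteq> i\<close> \<open>a \<noteq> j\<close> E'o by (intro kD_eq.berman_nonadj) auto
          have h2: "kD_eq V E' (LBr (Gen a) (Gen j)) LZero"
            using assms ab \<open>a \<noteq> i\<close> \<open>a \<noteq> j\<close> E'j by (intro kD_eq.berman_nonadj) auto
          show ?thesis using True \<open>a \<noteq> j\<close> Ln1[OF h1 h2] by (simp add: f_def)
        next
          case False
          then show ?thesis using \<open>a \<noteq> j\<close> ab E'o by (auto simp: f_def intro: kD_eq.berman_nonadj)
        qed
      qed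
    qed
    have "induces_hom V E V E' (subst f)" by (rule hom_basic[OF resp fV])
    moreover have "induces_surj V V E' (subst f)"
      unfolding induces_surj_def
    proof (intro allI impI)
      fix y :: "('a,'v) lterm" assume wy: "wf_term V y"
      define g :: "'v \<Rightarrow> ('a,'v) lterm" where "g = (\<lambda>r. if r = j then LScal (-1) (LBr (Gen i) (Gen j)) else Gen r)"
      have gV: "\<forall>r\<in>V. gens (g r) \<subseteq> V" using assms(2,3) by (auto simp: g_def)
      have "\<forall>r\<in>gens y. kD_eq V E' (subst f (g r)) (Gen r)"
      proof
        fix r assume "r \<in> gens y"
        show "kD_eq V E' (subst f (g r)) (Gen r)"
        proof (cases "r = j")
          case True
          then have "subst f (g r) = LScal (-1) (LBr (Gen i) (LBr (Gen i) (Gen j)))"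
            using assms(4) by (simp add: f_def g_def)
          then show ?thesis using True neg_swap[OF bij] by simp
        qed (simp add: f_def g_def kD_eq.refl)
      qed
      then have "kD_eq V E' (subst f (subst g y)) y" by (rule subst_inv)
      moreover have "wf_term V (subst g y)" by (rule subst_wf[OF wy gV])
      ultimately show "\<exists>x. wf_term V x \<and> kD_eq V E' (subst f x) y" by blast
    qed
    ultimately have "\<exists>\<phi> :: ('a::field_char_0, 'v) lterm \<Rightarrow> ('a, 'v) lterm.
          induces_hom V E V E' \<phi> \<and> induces_surj V V E' \<phi> \<and>
          (\<forall>r\<in>V - {j}. kD_eq V E' (\<phi> (Gen r)) (Gen r)) \<and>
          kD_eq V E' (\<phi> (Gen j)) (LBr (Gen i) (Gen j))"
      by (intro exI[of _ "subst f"]) (auto simp: f_def intro: kD_eq.refl)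
    then show "let E' = (\<lambda>x y. E x y \<and> ((x = j \<or> y = j) \<longrightarrow> {x, y} = {i, j})) in
       (\<exists>\<phi> :: ('a::field_char_0, 'v) lterm \<Rightarrow> ('a, 'v) lterm.
          induces_hom V E V E' \<phi> \<and> induces_surj V V E' \<phi> \<and>
          (\<forall>r\<in>V - {j}. kD_eq V E' (\<phi> (Gen r)) (Gen r)) \<and>
          kD_eq V E' (\<phi> (Gen j)) (LBr (Gen i) (Gen j)))"
      unfolding E'_def Let_def .
  }
qed

end
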